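(* Let $X_1,X_2,\dots$ be i.i.d. $\mathcal{N}(\mu_1,1)$ with $\mu_1\neq0$, let $f_0$ and $f_1$ be the densities of $\mathcal{N}(0,1)$ and $\mathcal{N}(\mu_1,1)$, and for $t\ge0$ let $$\hat\nu_t^{\mathrm{CUSUM}}=\arg\max_{0\le k\le t}\sum_{i=k+1}^t\log\frac{f_1(X_i)}{f_0(X_i)}.$$ Then $$\mathbb{E}\Big[\sup_{t\ge0}\hat\nu_t^{\mathrm{CUSUM}}\Big]\le\sum_{n=1}^\infty n\exp\left(-\frac{n\mu_1^2}{8}\right).$$
   Context: This is the single-stream setting with change-point at time $0$: every observation is drawn from the post-change distribution $\mathcal{N}(\mu_1,1)$. An empty sum equals $0$. *)

theory Defs
  imports "HOL-Probability.Probability"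
begin

definition llr :: "real \<Rightarrow> real \<Rightarrow> real" where
  "llr \<mu>\<^sub>1 x = ln (normal_density \<mu>\<^sub>1 1 x / normal_density 0 1 x)"

definition cusum_stat :: "real \<Rightarrow> (nat \<Rightarrow> 'a \<Rightarrow> real) \<Rightarrow> nat \<Rightarrow> nat \<Rightarrow> 'a \<Rightarrow> real" where
  "cusum_stat \<mu>\<^sub>1 X k t \<omega> = (\<Sum>i\<in>{k+1..t}. llr \<mu>\<^sub>1 (X i \<omega>))"

definition nu_cusum :: "real \<Rightarrow> (nat \<Rightarrow> 'a \<Rightarrow> real) \<Rightarrow> nat \<Rightarrow> 'a \<Rightarrow> nat" where
  "nu_cusum \<mu>\<^sub>1 X t \<omega> =
     (GREATEST k. k \<le> t \<and> (\<forall>j\<le>t. cusum_stat \<mu>\<^sub>1 X j t \<omega> \<le> cusum_stat \<mu>\<^sub>1 X k t \<omega>))"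

end

theory Submission imports Defs begin

lemma llr_eq: "llr m x = m*x - m\<^sup>2/2"
  unfolding llr_def normal_density_def
  by (simp add: ln_div ln_mult power2_eq_square algebra_simps) (simp add: field_simps)

lemma cs0: "cusum_stat m X 0 k w = m * (\<Sum>i\<in>{1..k}. X i w) - real k * m\<^sup>2/2"
  unfolding cusum_stat_def llr_eq
  by (simp add: sum_subtractf sum_distrib_left)

lemma cs_split: "n \<le> t \<Longrightarrow> cusum_stat m X 0 t w = cusum_stat m X 0 n w + cusum_stat m X n t w"
  unfolding cusum_stat_def
proof -
  assume "n \<le> t"
  then have "{0+1..t} = {1..n} \<union> {n+1..t}" by auto
  then show "(\<Sum>i\<in>{0+1..t}. llr m (X i w)) = (\<Sum>i\<in>{0+1..n}. llr m (X i w)) + (\<Sum>i\<in>{n+1..t}. llr m (X i w))"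
    by (simp add: sum.union_disjoint ivl_disj_int)
qed

lemma ennreal_term_le: "f n \<le> (\<Sum>k. f k :: ennreal)"
  using ennreal_suminf_lessD not_less by blast

lemma pointwise:
  "ennreal (real (nu_cusum m X t w)) \<le> (\<Sum>k. ennreal (real k * exp (- cusum_stat m X 0 k w / 2)))"
proof -
  define f where "f j = cusum_stat m X j t w" for j
  define n where "n = nu_cusum m X t w"
  have ex: "\<exists>k. k \<le> t \<and> (\<forall>j\<le>t. f j \<le> f k)"
  proof -
    have fin: "finite (f ` {..t})" "f ` {..t} \<noteq> {}" by auto
    then have "Max (f ` {..t}) \<in> f ` {..t}" by (rule Max_in)
    then obtain k where k: "k \<le> t" "f k = Max (f ` {..t})" by (metis atMost_iff imageE)
    have "\<forall>j\<le>t. f j \<le> f k" using k fin by auto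
    then show ?thesis using k by blast
  qed
  have "n \<le> t \<and> (\<forall>j\<le>t. f j \<le> f n)"
    unfolding n_def nu_cusum_def f_def[symmetric]
    by (rule GreatestI_ex_nat[OF ex]) auto
  then have nt: "n \<le> t" and "f 0 \<le> f n" by auto
  then have "cusum_stat m X 0 n w \<le> 0"
    using cs_split[OF nt, of m X w] unfolding f_def by simp
  then have "1 \<le> exp (- cusum_stat m X 0 n w / 2)" by simp
  then have "real n \<le> real n * exp (- cusum_stat m X 0 n w / 2)"
    by (metis mult_left_mono mult.right_neutral of_nat_0_le_iff)
  then have "ennreal (real n) \<le> ennreal (real n * exp (- cusum_stat m X 0 n w / 2))"
    by (rule ennreal_leI)
  also have "\<dots> \<le> (\<Sum>k. ennreal (real k * exp (- cusum_stat m X 0 k w / 2)))"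
    by (rule ennreal_term_le)
  finally show ?thesis unfolding n_def .
qed

lemma gauss_identity:
  assumes "k \<ge> 1"
  shows "normal_density (real k * m) (sqrt (real k)) y * (real k * exp ((real k * m\<^sup>2/2 - m * y)/2))
     = real k * exp (- (real k * m\<^sup>2) / 8) * normal_density (real k * m / 2) (sqrt (real k)) y"
proof -
  have kp: "real k > 0" using assms by simp
  have "exp (- (y - real k * m)\<^sup>2 / (2 * (sqrt (real k))\<^sup>2)) * exp ((real k * m\<^sup>2/2 - m * y)/2)
      = exp (- (real k * m\<^sup>2) / 8) * exp (- (y - real k * m / 2)\<^sup>2 / (2 * (sqrt (real k))\<^sup>2))"
    unfolding exp_add[symmetric] using kp
    by (simp add: field_simps power2_eq_square)
  then show ?thesis unfolding normal_density_def by (simp add: algebra_simps)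
qed

lemma nd_nn_integral: "s > 0 \<Longrightarrow> (\<integral>\<^sup>+y. ennreal (normal_density a s y) \<partial>lborel) = 1"
  by (subst nn_integral_eq_integral) auto

lemma per_k:
  assumes P: "prob_space M"
    and ind: "prob_space.indep_vars M (\<lambda>_. borel) X {1..}"
    and dist: "\<And>i. i \<ge> 1 \<Longrightarrow> distributed M lborel (X i) (\<lambda>x. ennreal (normal_density m 1 x))"
  shows "(\<integral>\<^sup>+w. ennreal (real k * exp (- cusum_stat m X 0 k w / 2)) \<partial>M)
        = ennreal (real k * exp (- (real k * m\<^sup>2) / 8))"
proof (cases "k = 0")
  case True then show ?thesis by simp
next
  case False
  then have k1: "k \<ge> 1" by simp
  define Y where "Y w = (\<Sum>i\<in>{1..k}. X i w)" for w
  define g where "g y = ennreal (real k * exp ((real k * m\<^sup>2/2 - m * y)/2))" for y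
  have "distributed M lborel (\<lambda>x. \<Sum>i\<in>{1..k}. X i x)
     (normal_density (\<Sum>i\<in>{1..k}. m) (sqrt (\<Sum>i\<in>{1..k}. (1::real)\<^sup>2)))"
    apply (rule prob_space.sum_indep_normal[OF P])
    using k1 apply auto[2]
      apply (rule prob_space.indep_vars_subset[OF P ind]) apply auto[1]
    using dist by auto
  then have dY: "distributed M lborel Y (normal_density (real k * m) (sqrt (real k)))"
    unfolding Y_def by simp
  have "(\<integral>\<^sup>+w. ennreal (real k * exp (- cusum_stat m X 0 k w / 2)) \<partial>M) = (\<integral>\<^sup>+w. g (Y w) \<partial>M)"
    unfolding g_def Y_def cs0 by (simp add: algebra_simps)
  also have "\<dots> = (\<integral>\<^sup>+y. ennreal (normal_density (real k * m) (sqrt (real k)) y) * g y \<partial>lborel)"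
    by (rule distributed_nn_integral[OF dY, symmetric]) (simp add: g_def)
  also have "\<dots> = (\<integral>\<^sup>+y. ennreal (real k * exp (- (real k * m\<^sup>2) / 8)) * ennreal (normal_density (real k * m / 2) (sqrt (real k)) y) \<partial>lborel)"
    apply (rule nn_integral_cong)
    unfolding g_def
    by (simp add: ennreal_mult''[symmetric] gauss_identity[OF k1] del: ennreal_mult')
  also have "\<dots> = ennreal (real k * exp (- (real k * m\<^sup>2) / 8))"
    by (subst nn_integral_cmult) (use k1 in \<open>auto simp: nd_nn_integral\<close>)
  finally show ?thesis .
qed

theorem lemma5:
  fixes M :: "'a measure" and X :: "nat \<Rightarrow> 'a \<Rightarrow> real" and \<mu>\<^sub>1 :: real
  assumes "prob_space M"
    and "\<mu>\<^sub>1 \<noteq> 0"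
    and "prob_space.indep_vars M (\<lambda>_. borel) X {1..}"
    and "\<And>i. i \<ge> 1 \<Longrightarrow> distributed M lborel (X i) (\<lambda>x. ennreal (normal_density \<mu>\<^sub>1 1 x))"
  shows "(\<integral>\<^sup>+ \<omega>. (SUP t. ennreal (real (nu_cusum \<mu>\<^sub>1 X t \<omega>))) \<partial>M)
           \<le> (\<Sum>n. ennreal (real n * exp (- (real n * \<mu>\<^sub>1\<^sup>2) / 8)))"
proof -
  have meas: "(\<lambda>w. ennreal (real k * exp (- cusum_stat \<mu>\<^sub>1 X 0 k w / 2))) \<in> borel_measurable M" for k
  proof -
    have "X i \<in> borel_measurable M" if "i \<in> {1..k}" for i
      using distributed_measurable[OF assms(4)] that by (simp add: measurable_lborel1)
    then have "(\<lambda>w. \<Sum>i\<in>{1..k}. X i w) \<in> borel_measurable M" by (rule borel_measurable_sum)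
    then show ?thesis unfolding cs0 by measurable
  qed
  have "(\<integral>\<^sup>+ \<omega>. (SUP t. ennreal (real (nu_cusum \<mu>\<^sub>1 X t \<omega>))) \<partial>M)
      \<le> (\<integral>\<^sup>+ w. (\<Sum>k. ennreal (real k * exp (- cusum_stat \<mu>\<^sub>1 X 0 k w / 2))) \<partial>M)"
    by (rule nn_integral_mono) (rule SUP_least, rule pointwise)
  also have "\<dots> = (\<Sum>k. \<integral>\<^sup>+ w. ennreal (real k * exp (- cusum_stat \<mu>\<^sub>1 X 0 k w / 2)) \<partial>M)"
    by (rule nn_integral_suminf[of "\<lambda>k w. ennreal (real k * exp (- cusum_stat \<mu>\<^sub>1 X 0 k w / 2))"]) (rule meas)
  also have "\<dots> = (\<Sum>n. ennreal (real n * exp (- (real n * \<mu>\<^sub>1\<^sup>2) / 8)))"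
    using per_k[OF assms(1) assms(3) assms(4)] by simp
  finally show ?thesis .
qed
end
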